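(* For every $n\ge1$, $4Q_n(x/2)$ is divisible by $(x-2)^2$; writing $4Q_n(x/2)=(x-2)^2R_n(x)$ with $R_n$ a polynomial, one has the factorization \[ \Phi_n(x)=\tilde U^{\mathrm e}_n(x)\cdot 4Q_n\Big(\frac x2\Big)=(x-2)^2\cdot\tilde U^{\mathrm e}_n(x)\cdot R_n(x). \]
   Context: $U_n$ is the Chebyshev polynomial of the second kind, $U_n(\cos\theta)=\sin((n+1)\theta)/\sin\theta$, extended by $U_{-1}=0$, $U_{-2}=-1$; $\tilde U_n(x)=U_n(x/2)$, and $\Phi_n(x)=((n+1)x^2-6x-4n)\tilde U_n(x)+2(x+2)\tilde U_{n-1}(x)+2(x+2)$. $U^{\mathrm e}_n$ is defined by $U^{\mathrm e}_n(\cos\theta)=\frac{\sin((n+1)\theta/2)}{\sin(\theta/2)}$ for $n$ even and $\frac{\sin((n+1)\theta/2)}{\sin\theta}$ for $n$ odd, and $\tilde U^{\mathrm e}_n(x)=U^{\mathrm e}_n(x/2)$. For $k\ge1$, $Q_{2k}(x)=((2k+1)x^2-3x-2k)(U_k(x)-U_{k-1}(x))+(x+1)(U_{k-1}(x)-U_{k-2}(x))$, and for $k\ge0$, $Q_{2k+1}(x)=((2k+2)x^2-3x-2k-1)(U_{k+1}(x)-U_{k-1}(x))+(x+1)(U_k(x)-U_{k-2}(x))$. *)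

theory Defs
  imports Complex_Main "HOL-Computational_Algebra.Polynomial"
begin

fun chebU_nat :: "nat \<Rightarrow> real poly" where
  "chebU_nat 0 = 1"
| "chebU_nat (Suc 0) = [:0, 2:]"
| "chebU_nat (Suc (Suc n)) = [:0, 2:] * chebU_nat (Suc n) - chebU_nat n"

definition chebU :: "int \<Rightarrow> real poly" where
  "chebU n = (if n \<ge> 0 then chebU_nat (nat n)
              else if n = -1 then 0
              else if n = -2 then -1 else undefined)"

definition chebUt :: "int \<Rightarrow> real poly" where
  "chebUt n = pcompose (chebU n) [:0, 1/2:]"

definition Phi :: "nat \<Rightarrow> real poly" where
  "Phi n = [:- 4 * real n, -6, real n + 1:] * chebUt (int n)
           + smult 2 [:2, 1:] * chebUt (int n - 1) + smult 2 [:2, 1:]"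

definition chebUe :: "nat \<Rightarrow> real poly" where
  "chebUe n = (THE p. \<forall>t::real.
      (if even n then sin (t/2) \<noteq> 0 \<longrightarrow> poly p (cos t) = sin ((real n + 1) * t / 2) / sin (t/2)
       else sin t \<noteq> 0 \<longrightarrow> poly p (cos t) = sin ((real n + 1) * t / 2) / sin t))"

definition chebUet :: "nat \<Rightarrow> real poly" where
  "chebUet n = pcompose (chebUe n) [:0, 1/2:]"

definition chebQ :: "nat \<Rightarrow> real poly" where
  "chebQ n = (let k = int (n div 2) in
     if even n then
       [:- of_int (2*k), -3, of_int (2*k+1):] * (chebU k - chebU (k-1))
       + [:1, 1:] * (chebU (k-1) - chebU (k-2))
     else
       [:- of_int (2*k+1), -3, of_int (2*k+2):] * (chebU (k+1) - chebU (k-1))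
       + [:1, 1:] * (chebU k - chebU (k-2)))"

end

theory Submission
  imports Defs
begin


fun W :: "nat \<Rightarrow> real poly" where
  "W 0 = -1" | "W (Suc 0) = 0" | "W (Suc (Suc k)) = [:0,2:] * W (Suc k) - W k"

lemma W_rec: "W (k+2) = [:0,2:] * W (k+1) - W k"
  by (simp add: numeral_2_eq_2)

lemma W2: "W 2 = 1" "W (Suc (Suc 0)) = 1" by (simp_all add: numeral_2_eq_2)

declare W.simps(3)[simp del]

lemma W_nat: "W (k+2) = chebU_nat k"
proof (induction k rule: chebU_nat.induct)
  case 1 then show ?case by (simp add: W2)
next
  case 2 then show ?case using W_rec[of 1] by (simp add: W2)
next
  case (3 n)
  have "W (Suc (Suc n) + 2) = [:0,2:] * W (Suc n + 2) - W (n+2)"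
    using W_rec[of "Suc (Suc n)"] by simp
  then show ?case using 3 by simp
qed

lemma chebU_W: "n \<ge> -2 \<Longrightarrow> chebU n = W (nat (n+2))"
proof -
  assume "n \<ge> -2"
  then consider "n \<ge> 0" | "n = -1" | "n = -2" by linarith
  then show ?thesis
  proof cases
    case 1
    then have "nat (n+2) = nat n + 2" by simp
    then show ?thesis using 1 by (simp only: chebU_def W_nat if_True)
  next
    case 2 then show ?thesis by (simp add: chebU_def)
  next
    case 3 then show ?thesis by (simp add: chebU_def)
  qed
qed

lemma W_add: "W (a+b+1) = W (a+1) * W (b+2) - W a * W (b+1)"
proof (induction b rule: W.induct)
  case 1 then show ?case by (simp add: W2)
next
  case 2 then show ?case by (simp add: W2 W.simps(3) algebra_simps)
next
  case (3 k)
  have e1: "W (a + Suc (Suc k) + 1) = [:0,2:] * W (a + Suc k + 1) - W (a+k+1)"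
    using W_rec[of "a+k+1"] by (simp add: add.commute)
  have e2: "W (Suc (Suc k) + 2) = [:0,2:] * W (Suc k + 2) - W (k+2)"
    using W_rec[of "k+2"] by simp
  have e3: "W (Suc (Suc k) + 1) = [:0,2:] * W (Suc k + 1) - W (k+1)"
    using W_rec[of "k+1"] by simp
  show ?case unfolding e1 e2 e3 3 by (simp add: algebra_simps)
qed

lemma ring_cass: "(a1::'a::comm_ring_1)^2 - a2 * a0 = 1 \<Longrightarrow> a2 = x * a1 - a0 \<Longrightarrow> a3 = x * a2 - a1
   \<Longrightarrow> a2^2 - a3 * a1 = 1"
proof -
  assume h: "a1^2 - a2 * a0 = 1" "a2 = x * a1 - a0" "a3 = x * a2 - a1"
  have "a2^2 - a3*a1 = a2^2 - (x*a2 - a1)*a1" using h(3) by simp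
  also have "\<dots> = a1^2 - (x*a1 - a2)*a2" by (simp add: algebra_simps power2_eq_square)
  also have "x*a1 - a2 = a0" using h(2) by simp
  finally show ?thesis using h(1) by (simp add: mult.commute)
qed

lemma W_cassini: "W (m+1)^2 - W (m+2) * W m = 1"
proof (induction m)
  case 0 then show ?case by (simp add: W2)
next
  case (Suc m)
  have r1: "W (m + 2) = [:0, 2:] * W (m + 1) - W m" by (rule W_rec)
  have r2: "W (m + 3) = [:0, 2:] * W (m + 2) - W (m+1)" using W_rec[of "m+1"] by (simp add: numeral_3_eq_3 numeral_2_eq_2)
  have "W (m+2)^2 - W (m+3) * W (m+1) = 1" by (rule ring_cass[OF Suc r1 r2])
  then show ?case by (simp add: numeral_3_eq_3 numeral_2_eq_2)
qed

lemma W_at1: "poly (W k) 1 = real k - 1"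
proof (induction k rule: W.induct)
  case (3 k) then show ?case by (simp add: W.simps(3) algebra_simps)
qed auto

lemma W_d1: "poly (pderiv (W k)) 1 = (real k - 2) * (real k - 1) * real k / 3"
proof (induction k rule: W.induct)
  case (3 k)
  have "pderiv (W (Suc (Suc k))) = [:2:] * W (Suc k) + [:0,2:] * pderiv (W (Suc k)) - pderiv (W k)"
    by (simp add: W.simps(3) pderiv_smult pderiv_mult pderiv_diff pderiv_pCons algebra_simps)
  then have "poly (pderiv (W (Suc (Suc k)))) 1 = 2*poly (W (Suc k)) 1 + 2*poly (pderiv (W (Suc k))) 1 - poly (pderiv (W k)) 1"
    by simp
  then show ?case unfolding 3 W_at1
    by (simp add: field_simps)
qed (auto simp: pderiv_minus)

lemma sin_step: "sin ((x::real) + b) = 2 * cos b * sin x - sin (x - b)"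
  by (simp add: sin_add sin_diff)

lemma trig_seq:
  assumes rec: "\<And>k. f (k+2) = [:0,2:] * f (k+1) - f k"
    and h0: "poly (f 0) (cos b) * c = sin a" and h1: "poly (f 1) (cos b) * c = sin (a+b)"
  shows "poly (f k) (cos b) * c = sin (a + real k * b)"
proof -
  have "poly (f k) (cos b) * c = sin (a + real k * b) \<and>
        poly (f (k+1)) (cos b) * c = sin (a + real (k+1) * b)"
  proof (induction k)
    case 0 then show ?case using h0 h1 by simp
  next
    case (Suc k)
    have "poly (f (k+2)) (cos b) * c = 2 * cos b * (poly (f (k+1)) (cos b) * c) - poly (f k) (cos b) * c"
      unfolding rec by (simp add: algebra_simps)
    also have "\<dots> = 2 * cos b * sin (a + real (k+1) * b) - sin (a + real k * b)" using Suc by simp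
    also have "\<dots> = sin (a + real (k+2) * b)"
      using sin_step[of "a + real (k+1) * b" b] by (simp add: algebra_simps)
    finally show ?case using Suc by (simp add: numeral_2_eq_2)
  qed
  then show ?thesis by blast
qed

lemma poly_eq_on_cos:
  fixes p q :: "real poly"
  assumes "\<And>t. 0 < t \<Longrightarrow> t < pi \<Longrightarrow> poly p (cos t) = poly q (cos t)"
  shows "p = q"
proof (rule ccontr)
  assume "p \<noteq> q"
  then have "p - q \<noteq> 0" by simp
  then have fin: "finite {x. poly (p - q) x = 0}" by (rule poly_roots_finite)
  have "{-1<..<1::real} \<subseteq> {x. poly (p - q) x = 0}"
  proof
    fix x :: real assume "x \<in> {-1<..<1}"
    then have x: "-1 < x" "x < 1" by auto
    have "0 < arccos x" "arccos x < pi" using arccos_lt_bounded[OF x] by auto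
    then have "poly p (cos (arccos x)) = poly q (cos (arccos x))" by (rule assms)
    then show "x \<in> {x. poly (p - q) x = 0}" using x by simp
  qed
  then have "finite {-1<..<1::real}" using fin finite_subset by blast
  then show False using infinite_Ioo[of "-1::real" 1] by simp
qed

lemma W_trig: "poly (W k) (cos t) * sin t = sin (- t + real k * t)"
  by (rule trig_seq) (rule W_rec, auto)

lemma E_trig: "poly (W (k+2) + W (k+1)) (cos t) * sin (t/2) = sin (t/2 + real k * t)"
proof (rule trig_seq[where f = "\<lambda>k. W (k+2) + W (k+1)"])
  fix k
  show "W (k + 2 + 2) + W (k + 2 + 1) = [:0, 2:] * (W (k + 1 + 2) + W (k + 1 + 1)) - (W (k + 2) + W (k + 1))"
  proof -
    have gen: "a + b = x*(b+c) - (c+d)" if "a = x*b - c" "b = x*c - d" for a b c d x :: "real poly"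
    proof -
      have "a + b = (x*b - c) + (x*c - d)" by (rule arg_cong2[where f="(+)", OF that])
      also have "\<dots> = x*(b+c) - (c+d)" by (simp add: algebra_simps)
      finally show ?thesis .
    qed
    have "W (k+4) + W (k+3) = [:0, 2:] * (W (k+3) + W (k+2)) - (W (k+2) + W (k+1))"
      apply (rule gen)
      using W_rec[of "k+2"] W_rec[of "k+1"] by (simp_all add: eval_nat_numeral)
    then show ?thesis by (simp add: eval_nat_numeral)
  qed
next
  show "poly (W (0 + 2) + W (0 + 1)) (cos t) * sin (t / 2) = sin (t / 2)" by (simp add: W2)
next
  have w3: "W 3 = [:0,2:]" "W (Suc (Suc (Suc 0))) = [:0,2:]" using W_rec[of 1] by (simp_all add: W2 numeral_3_eq_3)
  have "sin (t/2 + t) = 2 * cos t * sin (t/2) - sin (t/2 - t)" by (rule sin_step)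
  moreover have "sin (t/2 - t) = - sin (t/2)" 
  proof -
    have "t/2 - t = -(t/2)" by simp
    then show ?thesis by (simp only: sin_minus)
  qed
  ultimately show "poly (W (1 + 2) + W (1 + 1)) (cos t) * sin (t / 2) = sin (t / 2 + t)"
    by (simp add: w3 W2 algebra_simps)
qed

lemma chebUe_even: "chebUe (2*m) = W (m+2) + W (m+1)"
proof -
  have key: "sin (t/2) \<noteq> 0 \<longrightarrow> poly (W (m+2) + W (m+1)) (cos t) = sin ((real (2*m) + 1) * t / 2) / sin (t/2)" for t
  proof -
    have "(real (2*m) + 1) * t / 2 = t/2 + real m * t" by (simp add: field_simps)
    then show ?thesis using E_trig[of m t] by (simp add: field_simps)
  qed
  show ?thesis unfolding chebUe_def
  proof (rule the_equality)
    show "\<forall>t. if even (2*m) then sin (t/2) \<noteq> 0 \<longrightarrow> poly (W (m+2) + W (m+1)) (cos t) = sin ((real (2*m) + 1) * t / 2) / sin (t/2)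
       else sin t \<noteq> 0 \<longrightarrow> poly (W (m+2) + W (m+1)) (cos t) = sin ((real (2*m) + 1) * t / 2) / sin t"
      using key by simp
  next
    fix p assume "\<forall>t. if even (2*m) then sin (t/2) \<noteq> 0 \<longrightarrow> poly p (cos t) = sin ((real (2*m) + 1) * t / 2) / sin (t/2)
       else sin t \<noteq> 0 \<longrightarrow> poly p (cos t) = sin ((real (2*m) + 1) * t / 2) / sin t"
    then have hp: "\<And>t. sin (t/2) \<noteq> 0 \<Longrightarrow> poly p (cos t) = sin ((real (2*m) + 1) * t / 2) / sin (t/2)" by simp
    show "p = W (m+2) + W (m+1)"
    proof (rule poly_eq_on_cos)
      fix t :: real assume "0 < t" "t < pi"
      then have "sin (t/2) \<noteq> 0" using sin_gt_zero[of "t/2"] by simp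
      then show "poly p (cos t) = poly (W (m+2) + W (m+1)) (cos t)" using hp key by simp
    qed
  qed
qed

lemma chebUe_odd: "chebUe (2*m+1) = W (m+2)"
proof -
  have key: "sin t \<noteq> 0 \<longrightarrow> poly (W (m+2)) (cos t) = sin ((real (2*m+1) + 1) * t / 2) / sin t" for t
  proof -
    have eq: "(real (2*m+1) + 1) * t / 2 = - t + real (m+2) * t" by (simp add: field_simps)
    show ?thesis unfolding eq using W_trig[of "m+2" t] by (simp add: nonzero_eq_divide_eq)
  qed
  show ?thesis unfolding chebUe_def
  proof (rule the_equality)
    show "\<forall>t. if even (2*m+1) then sin (t/2) \<noteq> 0 \<longrightarrow> poly (W (m+2)) (cos t) = sin ((real (2*m+1) + 1) * t / 2) / sin (t/2)
       else sin t \<noteq> 0 \<longrightarrow> poly (W (m+2)) (cos t) = sin ((real (2*m+1) + 1) * t / 2) / sin t"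
      using key by simp
  next
    fix p assume "\<forall>t. if even (2*m+1) then sin (t/2) \<noteq> 0 \<longrightarrow> poly p (cos t) = sin ((real (2*m+1) + 1) * t / 2) / sin (t/2)
       else sin t \<noteq> 0 \<longrightarrow> poly p (cos t) = sin ((real (2*m+1) + 1) * t / 2) / sin t"
    then have hp: "\<And>t. sin t \<noteq> 0 \<Longrightarrow> poly p (cos t) = sin ((real (2*m+1) + 1) * t / 2) / sin t" by simp
    show "p = W (m+2)"
    proof (rule poly_eq_on_cos)
      fix t :: real assume "0 < t" "t < pi"
      then have "sin t \<noteq> 0" using sin_gt_zero[of t] by simp
      then show "poly p (cos t) = poly (W (m+2)) (cos t)" using hp key by simp
    qed
  qed
qed



lemma Q_even: "chebQ (2*m) = [:-(2*real m), -3, 2*real m + 1:] * (W (m+2) - W (m+1)) + [:1,1:] * (W (m+1) - W m)"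
proof -
  have a: "chebU (int m) = W (m+2)" "chebU (int m - 1) = W (m+1)" "chebU (int m - 2) = W m"
    by (simp_all add: chebU_W nat_add_distrib)
  show ?thesis unfolding chebQ_def Let_def using a by simp
qed

lemma Q_odd: "chebQ (2*m+1) = [:-(2*real m+1), -3, 2*real m + 2:] * (W (m+3) - W (m+1)) + [:1,1:] * (W (m+2) - W m)"
proof -
  have a: "chebU (int m) = W (m+2)" "chebU (int m - 1) = W (m+1)" "chebU (int m - 2) = W m"
      "chebU (int m + 1) = W (m+3)"
    by (simp_all add: chebU_W nat_add_distrib add.commute)
  show ?thesis unfolding chebQ_def Let_def using a by simp
qed

definition hh :: "real poly" where "hh = [:0, 1/2:]"

lemma pc_quad: "pcompose [:a, b, c:] hh = [:a, b/2, c/4:]"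
  by (simp add: hh_def pcompose_pCons)

lemma pc_lin: "pcompose [:a, b:] hh = [:a, b/2:]"
  by (simp add: hh_def pcompose_pCons)

lemma Phi_W: "Phi n = pcompose ([:-4*real n, -12, 4*real n + 4:] * W (n+2) + [:4,4:] * W (n+1) + [:4,4:]) hh"
proof -
  have a: "chebU (int n) = W (n+2)" "chebU (int n - 1) = W (n+1)"
    by (simp_all add: chebU_W nat_add_distrib)
  have b: "[:- 4 * real n, -6, real n + 1:] = pcompose [:-4*real n, -12, 4*real n + 4:] hh"
    "smult 2 [:2, 1:] = pcompose [:4,4:] hh"
    by (simp_all add: pc_quad pc_lin)
  show ?thesis unfolding Phi_def chebUt_def a b hh_def[symmetric]
    by (simp only: pcompose_add pcompose_mult)
qed



lemma ring_even:
  fixes A B P Q R c :: "'a::comm_ring_1"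
  assumes h: "Q^2 - P*R = 1"
  shows "c*A*(P*P - Q*Q) + c*B*(Q*P - R*Q) + c*B = (P+Q) * (c*(A*(P-Q) + B*(Q-R)))"
proof -
  have "c*A*(P*P - Q*Q) + c*B*(Q*P - R*Q) + c*B*(Q^2 - P*R) = (P+Q) * (c*(A*(P-Q) + B*(Q-R)))"
    by (simp add: algebra_simps power2_eq_square)
  then show ?thesis unfolding h by simp
qed

lemma ring_odd:
  fixes A B P Q R S c :: "'a::comm_ring_1"
  assumes h: "Q^2 - P*R = 1"
  shows "c*A*(P*S - Q*P) + c*B*(P*P - Q*Q) + c*B = P * (c*(A*(S-Q) + B*(P-R)))"
proof -
  have "c*A*(P*S - Q*P) + c*B*(P*P - Q*Q) + c*B*(Q^2 - P*R) = P * (c*(A*(S-Q) + B*(P-R)))"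
    by (simp add: algebra_simps power2_eq_square)
  then show ?thesis unfolding h by simp
qed

lemma smult_c: "smult c p = [:c:] * p" by simp

lemma main_even: "[:-4*real (2*m), -12, 4*real (2*m) + 4:] * W (2*m+2) + [:4,4:] * W (2*m+1) + [:4,4:]
   = chebUe (2*m) * smult 4 (chebQ (2*m))"
proof -
  have w1: "W (2*m+2) = W (m+2) * W (m+2) - W (m+1) * W (m+1)"
    using W_add[of "m+1" m] by (simp add: mult_2 add.commute add.left_commute)
  have w2: "W (2*m+1) = W (m+1) * W (m+2) - W m * W (m+1)"
    using W_add[of m m] by (simp add: mult_2)
  have c1: "[:-4*real (2*m), -12, 4*real (2*m) + 4:] = [:4:] * [:-(2*real m), -3, 2*real m + 1:]"
    by simp
  have c2: "[:4,4::real:] = [:4:] * [:1,1:]" by simp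
  show ?thesis unfolding chebUe_even Q_even w1 w2 c1 c2 smult_c
    by (rule ring_even[OF W_cassini])
qed

lemma main_odd: "[:-4*real (2*m+1), -12, 4*real (2*m+1) + 4:] * W (2*m+1+2) + [:4,4:] * W (2*m+1+1) + [:4,4:]
   = chebUe (2*m+1) * smult 4 (chebQ (2*m+1))"
proof -
  have w1: "W (2*m+1+2) = W (m+2) * W (m+3) - W (m+1) * W (m+2)"
    using W_add[of "m+1" "m+1"] by (simp add: mult_2 eval_nat_numeral)
  have w2: "W (2*m+1+1) = W (m+2) * W (m+2) - W (m+1) * W (m+1)"
    using W_add[of "m+1" m] by (simp add: mult_2 add.commute add.left_commute)
  have c1: "[:-4*real (2*m+1), -12, 4*real (2*m+1) + 4:] = [:4:] * [:-(2*real m+1), -3, 2*real m + 2:]"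
    by simp
  have c2: "[:4,4::real:] = [:4:] * [:1,1:]" by simp
  show ?thesis unfolding chebUe_odd Q_odd w1 w2 c1 c2 smult_c
    by (rule ring_odd[OF W_cassini])
qed

lemma dvd2:
  fixes p :: "real poly"
  assumes "poly p 1 = 0" "poly (pderiv p) 1 = 0"
  shows "\<exists>S. p = [:-1,1:]^2 * S"
proof -
  from assms(1) have "[:-1,1:] dvd p" using poly_eq_0_iff_dvd[of p 1] by simp
  then obtain q where q: "p = [:-1,1:] * q" by (auto elim: dvdE)
  have "pderiv p = q + [:-1,1:] * pderiv q"
    unfolding q by (simp add: pderiv_mult pderiv_pCons pderiv_diff)
  then have "poly q 1 = 0" using assms(2) by simp
  then have "[:-1,1:] dvd q" using poly_eq_0_iff_dvd[of q 1] by simp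
  then obtain r where r: "q = [:-1,1:] * r" by (auto elim: dvdE)
  have "p = [:-1,1:]^2 * r" unfolding q r power2_eq_square by (rule mult.assoc[symmetric])
  then show ?thesis by blast
qed

lemma Q_dvd_even:
  assumes "m \<ge> 1"
  shows "\<exists>S. chebQ (2*m) = [:-1,1:]^2 * S"
proof (rule dvd2)
  show "poly (chebQ (2*m)) 1 = 0" unfolding Q_even by (simp add: W_at1)
  show "poly (pderiv (chebQ (2*m))) 1 = 0" unfolding Q_even
    by (simp add: W_at1 W_d1 pderiv_mult pderiv_add pderiv_diff pderiv_pCons pderiv_smult) (simp add: field_simps)
qed

lemma Q_dvd_odd:
  shows "\<exists>S. chebQ (2*m+1) = [:-1,1:]^2 * S"
proof (rule dvd2)
  show "poly (chebQ (2*m+1)) 1 = 0" unfolding Q_odd by (simp add: W_at1)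
  show "poly (pderiv (chebQ (2*m+1))) 1 = 0" unfolding Q_odd
    by (simp add: W_at1 W_d1 pderiv_mult pderiv_add pderiv_diff pderiv_pCons pderiv_smult) (simp add: field_simps)
qed



lemma final_gen:
  assumes id: "Phi n = pcompose (chebUe n * smult 4 (chebQ n)) hh"
    and S: "chebQ n = [:-1,1:]^2 * S"
  shows "\<exists>R :: real poly.
           smult 4 (pcompose (chebQ n) [:0, 1/2:]) = [:-2, 1:]^2 * R
         \<and> Phi n = chebUet n * smult 4 (pcompose (chebQ n) [:0, 1/2:])
         \<and> Phi n = [:-2, 1:]^2 * chebUet n * R"
proof -
  define R where "R = pcompose S hh"
  have sq: "[:-2,1::real:] * [:-2,1:] = smult 4 ([:-1,1/2:] * [:-1,1/2:])"
    by simp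
  have e1: "smult 4 (pcompose (chebQ n) hh) = [:-2, 1:]^2 * R"
    unfolding S R_def sq pcompose_mult power2_eq_square pc_lin
    by (simp only: mult_smult_left)
  have e2: "Phi n = chebUet n * smult 4 (pcompose (chebQ n) hh)"
    unfolding id chebUet_def hh_def[symmetric] pcompose_mult pcompose_smult by simp
  have e3: "Phi n = [:-2, 1:]^2 * chebUet n * R"
    unfolding e2 e1 by (simp add: ac_simps)
  show ?thesis using e1 e2 e3 unfolding hh_def by blast
qed

theorem theoremB7:
  fixes n :: nat
  assumes "n \<ge> 1"
  shows "\<exists>R :: real poly.
           smult 4 (pcompose (chebQ n) [:0, 1/2:]) = [:-2, 1:]^2 * R
         \<and> Phi n = chebUet n * smult 4 (pcompose (chebQ n) [:0, 1/2:])
         \<and> Phi n = [:-2, 1:]^2 * chebUet n * R"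
proof (cases "even n")
  case True
  then obtain m where n: "n = 2*m" by blast
  with assms have "m \<ge> 1" by simp
  then obtain S where S: "chebQ n = [:-1,1:]^2 * S" using Q_dvd_even n by blast
  have id: "Phi n = pcompose (chebUe n * smult 4 (chebQ n)) hh"
    unfolding Phi_W n main_even[symmetric] by (simp add: add.commute)
  show ?thesis by (rule final_gen[OF id S])
next
  case False
  then obtain m where n: "n = 2*m+1" using oddE by blast
  obtain S where S: "chebQ n = [:-1,1:]^2 * S" using Q_dvd_odd n by blast
  have id: "Phi n = pcompose (chebUe n * smult 4 (chebQ n)) hh"
    unfolding Phi_W n main_odd[symmetric] by simp
  show ?thesis by (rule final_gen[OF id S])
qed

end
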